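(* Let $\mathbf u\in\{0,1\}^{\mathbb N}$ with $\mathbf u\ne0^k\overline1$ and $\mathbf u\ne1^k\overline0$ for all $k\ge0$. Then there is a suffix $\mathbf v$ of $\mathbf u$ such that $\inf(\mathbf v)=\inf_1(\mathbf v)=\inf_1(\mathbf u)$ and $\sup(\mathbf v)=\sup_0(\mathbf v)=\sup_0(\mathbf u)$.
   Context: Infinite words over $\{0,1\}$ are ordered lexicographically; $\overline{a}$ denotes infinite repetition of $a$ and $0^k$ is the word of $k$ zeros. For $\mathbf u=u_1u_2\cdots\in\{0,1\}^{\mathbb N}$, $\sup(\mathbf u)$ and $\inf(\mathbf u)$ are the lexicographic supremum and infimum of $\{u_ku_{k+1}\cdots:k\ge1\}$, $\inf_1(\mathbf u)=\inf\{u_{k+1}u_{k+2}\cdots:k\ge1,\ u_k=1\}$ and $\sup_0(\mathbf u)=\sup\{u_{k+1}u_{k+2}\cdots:k\ge1,\ u_k=0\}$. A suffix of $\mathbf u$ is a word $u_ku_{k+1}\cdots$ with $k\ge1$. *)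

theory Defs
  imports Main
begin

text \<open>Infinite binary words u = u_1 u_2 ... are represented as functions nat => bool,
  indexed from 0 (u i is the letter u_{i+1}); True stands for letter 1, False for letter 0.\<close>

type_synonym bword = "nat \<Rightarrow> bool"

definition lex_less :: "bword \<Rightarrow> bword \<Rightarrow> bool" where
  "lex_less u v \<longleftrightarrow> (\<exists>n. (\<forall>i<n. u i = v i) \<and> \<not> u n \<and> v n)"

definition lex_le :: "bword \<Rightarrow> bword \<Rightarrow> bool" where
  "lex_le u v \<longleftrightarrow> u = v \<or> lex_less u v"

definition lsup :: "bword set \<Rightarrow> bword" where
  "lsup S = (THE s. (\<forall>x\<in>S. lex_le x s) \<and> (\<forall>t. (\<forall>x\<in>S. lex_le x t) \<longrightarrow> lex_le s t))"

definition linf :: "bword set \<Rightarrow> bword" where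
  "linf S = (THE s. (\<forall>x\<in>S. lex_le s x) \<and> (\<forall>t. (\<forall>x\<in>S. lex_le t x) \<longrightarrow> lex_le t s))"

text \<open>The suffix u_{k+1} u_{k+2} ... (0-based: drop the first k letters).\<close>
definition suffix :: "bword \<Rightarrow> nat \<Rightarrow> bword" where
  "suffix u k = (\<lambda>i. u (i + k))"

definition wsup :: "bword \<Rightarrow> bword" where
  "wsup u = lsup {suffix u k | k. True}"

definition winf :: "bword \<Rightarrow> bword" where
  "winf u = linf {suffix u k | k. True}"

definition inf1 :: "bword \<Rightarrow> bword" where
  "inf1 u = linf {suffix u (k + 1) | k. u k}"

definition sup0 :: "bword \<Rightarrow> bword" where
  "sup0 u = lsup {suffix u (k + 1) | k. \<not> u k}"

end

theory Submission imports Defs begin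

lemma lex_less_asym: "lex_less u v \<Longrightarrow> \<not> lex_less v u"
  unfolding lex_less_def
  by (metis linorder_neqE_nat)

lemma lex_less_irrefl: "\<not> lex_less u u"
  unfolding lex_less_def by blast

lemma lex_less_trans: "lex_less u v \<Longrightarrow> lex_less v w \<Longrightarrow> lex_less u w"
proof -
  assume "lex_less u v" "lex_less v w"
  then obtain n m where n: "\<forall>i<n. u i = v i" "\<not> u n" "v n"
    and m: "\<forall>i<m. v i = w i" "\<not> v m" "w m" unfolding lex_less_def by blast
  show ?thesis
  proof (cases n m rule: linorder_cases)
    case less then show ?thesis unfolding lex_less_def using n m
      by (intro exI[of _ n]) auto
  next
    case equal then show ?thesis using n m by auto
  next
    case greater then show ?thesis unfolding lex_less_def using n m
      by (intro exI[of _ m]) auto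
  qed
qed

lemma lex_linear: "u \<noteq> v \<Longrightarrow> lex_less u v \<or> lex_less v u"
proof -
  assume "u \<noteq> v"
  then have "\<exists>n. u n \<noteq> v n" by auto
  then obtain n where n: "u n \<noteq> v n" "\<forall>i<n. \<not> u i \<noteq> v i"
    using exists_least_iff[of "\<lambda>n. u n \<noteq> v n"] by blast
  then show ?thesis unfolding lex_less_def by (cases "u n") auto
qed

interpretation lex: linorder lex_le lex_less
proof
  fix x y z :: bword
  show "lex_less x y = (lex_le x y \<and> \<not> lex_le y x)"
    unfolding lex_le_def using lex_less_asym lex_less_irrefl by blast
  show "lex_le x x" unfolding lex_le_def by simp
  show "lex_le x y \<Longrightarrow> lex_le y z \<Longrightarrow> lex_le x z"
    unfolding lex_le_def using lex_less_trans by blast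
  show "lex_le x y \<Longrightarrow> lex_le y x \<Longrightarrow> x = y"
    unfolding lex_le_def using lex_less_asym by blast
  show "lex_le x y \<or> lex_le y x"
    unfolding lex_le_def using lex_linear by blast
qed

fun ipre :: "bword set \<Rightarrow> nat \<Rightarrow> bool list" where
  "ipre S 0 = []"
| "ipre S (Suc n) = ipre S n @ [(\<forall>x\<in>S. (\<forall>i<n. x i = ipre S n ! i) \<longrightarrow> x n)]"

definition icand :: "bword set \<Rightarrow> bword" where
  "icand S = (\<lambda>n. ipre S (Suc n) ! n)"

lemma length_ipre: "length (ipre S n) = n"
  by (induction n) auto

lemma ipre_nth: "i < n \<Longrightarrow> ipre S n ! i = icand S i"
proof (induction n)
  case 0 then show ?case by simp
next
  case (Suc n)
  show ?case
  proof (cases "i < n")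
    case True then show ?thesis using Suc by (simp add: nth_append length_ipre)
  next
    case False then have "i = n" using Suc by simp
    then show ?thesis by (simp add: icand_def)
  qed
qed

lemma icand_eq: "icand S n = (\<forall>x\<in>S. (\<forall>i<n. x i = icand S i) \<longrightarrow> x n)"
  by (simp add: icand_def nth_append length_ipre ipre_nth)

lemma icand_lower: "x \<in> S \<Longrightarrow> lex_le (icand S) x"
proof (cases "x = icand S")
  case True then show ?thesis by simp
next
  case False
  assume x: "x \<in> S"
  from False have "\<exists>n. icand S n \<noteq> x n" by auto
  then obtain n where n: "icand S n \<noteq> x n" "\<forall>i<n. \<not> icand S i \<noteq> x i"
    using exists_least_iff[of "\<lambda>n. icand S n \<noteq> x n"] by blast
  have "\<not> icand S n"
  proof
    assume "icand S n"
    then have "x n" using x n(2) icand_eq[of S n] by auto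
    then show False using n(1) \<open>icand S n\<close> by simp
  qed
  then show ?thesis unfolding lex_le_def lex_less_def using n by auto
qed

lemma icand_greatest: "\<forall>x\<in>S. lex_le t x \<Longrightarrow> lex_le t (icand S)"
proof (rule ccontr)
  assume t: "\<forall>x\<in>S. lex_le t x" and nl: "\<not> lex_le t (icand S)"
  then have "lex_less (icand S) t" by auto
  then obtain n where n: "\<forall>i<n. icand S i = t i" "\<not> icand S n" "t n"
    unfolding lex_less_def by blast
  then obtain x where x: "x \<in> S" "\<forall>i<n. x i = icand S i" "\<not> x n"
    using icand_eq[of S n] by auto
  have "lex_less x t" unfolding lex_less_def using n x by (intro exI[of _ n]) auto
  then show False using t x(1) by auto
qed

lemma linf_char: "linf S = icand S"
  unfolding linf_def
  by (rule the_equality) (auto intro: icand_lower icand_greatest lex.order_antisym)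

lemma linf_lower: "x \<in> S \<Longrightarrow> lex_le (linf S) x"
  by (simp add: linf_char icand_lower)

lemma linf_greatest: "\<forall>x\<in>S. lex_le t x \<Longrightarrow> lex_le t (linf S)"
  by (simp add: linf_char icand_greatest)

definition neg :: "bword \<Rightarrow> bword" where "neg w = (\<lambda>i. \<not> w i)"

lemma neg_neg[simp]: "neg (neg w) = w" by (simp add: neg_def)
lemma neg_inj[simp]: "neg a = neg b \<longleftrightarrow> a = b" by (metis neg_neg)

lemma lex_less_neg[simp]: "lex_less (neg a) (neg b) \<longleftrightarrow> lex_less b a"
  unfolding lex_less_def neg_def by auto

lemma lex_le_neg[simp]: "lex_le (neg a) (neg b) \<longleftrightarrow> lex_le b a"
  unfolding lex_le_def by auto

lemma lsup_char: "lsup S = neg (linf (neg ` S))"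
  unfolding lsup_def
proof (rule the_equality)
  show "(\<forall>x\<in>S. lex_le x (neg (linf (neg ` S)))) \<and>
    (\<forall>t. (\<forall>x\<in>S. lex_le x t) \<longrightarrow> lex_le (neg (linf (neg ` S))) t)"
  proof (intro conjI allI impI ballI)
    fix x assume "x \<in> S"
    then have "lex_le (linf (neg ` S)) (neg x)" by (intro linf_lower) auto
    then show "lex_le x (neg (linf (neg ` S)))"
      using lex_le_neg[of x "linf (neg ` S)"] by (metis lex_le_neg neg_neg)
  next
    fix t assume "\<forall>x\<in>S. lex_le x t"
    then have "lex_le (neg t) (linf (neg ` S))" by (intro linf_greatest) auto
    then show "lex_le (neg (linf (neg ` S))) t" by (metis lex_le_neg neg_neg)
  qed
next
  fix s assume s: "(\<forall>x\<in>S. lex_le x s) \<and> (\<forall>t. (\<forall>x\<in>S. lex_le x t) \<longrightarrow> lex_le s t)"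
  have a: "lex_le (neg s) (linf (neg ` S))" using s by (intro linf_greatest) auto
  have "\<forall>x\<in>S. lex_le x (neg (linf (neg ` S)))"
  proof
    fix x assume "x \<in> S"
    then have "lex_le (linf (neg ` S)) (neg x)" by (intro linf_lower) auto
    then show "lex_le x (neg (linf (neg ` S)))" by (metis lex_le_neg neg_neg)
  qed
  then have "lex_le s (neg (linf (neg ` S)))" using s by blast
  then show "s = neg (linf (neg ` S))" using a by (metis lex.order_antisym lex_le_neg neg_neg)
qed

lemma lsup_upper: "x \<in> S \<Longrightarrow> lex_le x (lsup S)"
  unfolding lsup_char by (metis imageI lex_le_neg linf_lower neg_neg)

lemma lsup_least: "\<forall>x\<in>S. lex_le x t \<Longrightarrow> lex_le (lsup S) t"
  unfolding lsup_char
proof -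
  assume "\<forall>x\<in>S. lex_le x t"
  then have "lex_le (neg t) (linf (neg ` S))" by (intro linf_greatest) auto
  then show "lex_le (neg (linf (neg ` S))) t" by (metis lex_le_neg neg_neg)
qed


definition cns :: "bool \<Rightarrow> bword \<Rightarrow> bword" where
  "cns b w = (\<lambda>i. if i = 0 then b else w (i - 1))"

lemma suffix_0[simp]: "suffix u 0 = u" by (simp add: suffix_def)
lemma suffix_suffix[simp]: "suffix (suffix u k) j = suffix u (j + k)"
  by (simp add: suffix_def add.assoc)

lemma suffix_cns: "suffix u k = cns (u k) (suffix u (Suc k))"
  by (rule ext) (auto simp: suffix_def cns_def)

lemma neg_cns: "neg (cns b w) = cns (\<not> b) (neg w)"
  by (rule ext) (auto simp: neg_def cns_def)

lemma neg_suffix: "neg (suffix u k) = suffix (neg u) k"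
  by (simp add: neg_def suffix_def)

lemma le_cns_True: "lex_le w (cns True w)"
proof (cases "\<forall>i. w i")
  case True
  then have "cns True w = w" by (auto simp: cns_def)
  then show ?thesis by simp
next
  case False
  then obtain a where a: "\<not> w a" "\<forall>i<a. w i"
    using exists_least_iff[of "\<lambda>i. \<not> w i"] by auto
  have "lex_less w (cns True w)" unfolding lex_less_def
    using a by (intro exI[of _ a]) (auto simp: cns_def)
  then show ?thesis by (simp add: lex_le_def)
qed

lemma cns_False_le: "lex_le (cns False w) w"
proof -
  have "lex_le (neg w) (neg (cns False w))" using le_cns_True[of "neg w"] by (simp add: neg_cns)
  then show ?thesis by simp
qed

lemma cns_mono: "lex_le w w' \<Longrightarrow> lex_le (cns b w) (cns b w')"
  unfolding lex_le_def lex_less_def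
proof (elim disjE exE conjE)
  fix n assume n: "\<forall>i<n. w i = w' i" "\<not> w n" "w' n"
  show "cns b w = cns b w' \<or> (\<exists>n. (\<forall>i<n. cns b w i = cns b w' i) \<and> \<not> cns b w n \<and> cns b w' n)"
    using n by (intro disjI2 exI[of _ "Suc n"]) (auto simp: cns_def less_Suc_eq_0_disj)
qed simp

lemma top_le: "lex_le (\<lambda>_. True) w \<Longrightarrow> w = (\<lambda>_. True)"
  unfolding lex_le_def lex_less_def by auto

lemma cns_True_le_self: "lex_le (cns True w) w \<Longrightarrow> w = (\<lambda>_. True)"
proof -
  assume "lex_le (cns True w) w"
  then have e: "cns True w = w" using le_cns_True[of w] lex.order_antisym by blast
  have "w i" for i
  proof (induction i)
    case 0 then show ?case using fun_cong[OF e, of 0] by (simp add: cns_def)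
  next
    case (Suc i) then show ?case using fun_cong[OF e, of "Suc i"] by (simp add: cns_def)
  qed
  then show ?thesis by auto
qed

lemma start_True: "v 0 \<Longrightarrow> lex_le (cns True (\<lambda>_. False)) v"
proof -
  assume v: "v 0"
  show ?thesis
  proof (cases "\<exists>i>0. v i")
    case False
    have "v i = cns True (\<lambda>_. False) i" for i using v False by (cases i) (auto simp: cns_def)
    then have "v = cns True (\<lambda>_. False)" by auto
    then show ?thesis by simp
  next
    case True
    then obtain a where a: "a > 0" "v a" "\<forall>i<a. \<not> (i > 0 \<and> v i)"
      using exists_least_iff[of "\<lambda>i. i > 0 \<and> v i"] by auto
    have "lex_less (cns True (\<lambda>_. False)) v" unfolding lex_less_def
      using a v by (intro exI[of _ a]) (auto simp: cns_def)
    then show ?thesis by (simp add: lex_le_def)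
  qed
qed

definition S1 :: "bword \<Rightarrow> bword set" where
  "S1 v = {suffix v (k + 1) | k. v k}"

lemma inf1_S1: "inf1 v = linf (S1 v)" by (simp add: inf1_def S1_def)

lemma S1_mem: "v k \<Longrightarrow> lex_le (inf1 v) (suffix v (Suc k))"
  unfolding inf1_def by (rule linf_lower) auto

lemma S0_mem: "\<not> v k \<Longrightarrow> lex_le (suffix v (Suc k)) (sup0 v)"
  unfolding sup0_def by (rule lsup_upper) auto

lemma S1_cns: "S1 (cns b w) = (if b then insert w (S1 w) else S1 w)"
proof -
  have "S1 (cns b w) = (if b then {w} else {}) \<union> S1 w"
  proof (intro equalityI subsetI)
    fix x assume "x \<in> S1 (cns b w)"
    then obtain k where k: "x = suffix (cns b w) (k + 1)" "cns b w k" unfolding S1_def by auto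
    show "x \<in> (if b then {w} else {}) \<union> S1 w"
    proof (cases k)
      case 0 then show ?thesis using k by (auto simp: suffix_def cns_def)
    next
      case (Suc k') then show ?thesis using k unfolding S1_def
        by (auto simp: suffix_def cns_def intro!: exI[of _ k'])
    qed
  next
    fix x assume "x \<in> (if b then {w} else {}) \<union> S1 w"
    then show "x \<in> S1 (cns b w)"
    proof
      assume "x \<in> (if b then {w} else {})"
      then show ?thesis unfolding S1_def
        by (auto simp: suffix_def cns_def intro!: exI[of _ 0] split: if_splits)
    next
      assume "x \<in> S1 w"
      then obtain k where "x = suffix w (k + 1)" "w k" unfolding S1_def by auto
      then show ?thesis unfolding S1_def
        by (auto simp: suffix_def cns_def intro!: exI[of _ "Suc k"])
    qed
  qed
  then show ?thesis by auto
qed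

lemma linf_insert: "linf (insert x T) = x \<or> linf (insert x T) = linf T"
proof (cases "lex_le x (linf T)")
  case True
  have "lex_le x (linf (insert x T))"
    using True by (intro linf_greatest) (auto intro: lex.order_trans linf_lower)
  moreover have "lex_le (linf (insert x T)) x" by (rule linf_lower) auto
  ultimately show ?thesis using lex.order_antisym by blast
next
  case False
  then have F: "lex_le (linf T) x" by auto
  have "lex_le (linf T) (linf (insert x T))"
    using F by (intro linf_greatest) (auto intro: linf_lower)
  moreover have "lex_le (linf (insert x T)) (linf T)"
    by (rule linf_greatest) (auto intro: linf_lower)
  ultimately show ?thesis using lex.order_antisym by blast
qed

lemma inf1_step: "inf1 (suffix u g) \<noteq> inf1 (suffix u (Suc g)) \<Longrightarrow>
   u g \<and> inf1 (suffix u g) = suffix u (Suc g)"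
  using linf_insert[of "suffix u (Suc g)" "S1 (suffix u (Suc g))"]
  by (metis S1_cns inf1_S1 suffix_cns)

lemma winf_eq: "lex_le (inf1 v) v \<Longrightarrow> winf v = inf1 v"
proof -
  assume v: "lex_le (inf1 v) v"
  have all: "lex_le (inf1 v) (suffix v j)" for j
  proof (induction j)
    case 0 then show ?case using v by simp
  next
    case (Suc j)
    show ?case
    proof (cases "v j")
      case True then show ?thesis by (rule S1_mem)
    next
      case False
      have "suffix v j = cns False (suffix v (Suc j))" using False suffix_cns[of v j] by simp
      then show ?thesis using Suc cns_False_le[of "suffix v (Suc j)"]
        by (metis lex.order_trans)
    qed
  qed
  have a: "lex_le (inf1 v) (winf v)" unfolding winf_def
    using all by (intro linf_greatest) auto
  have "lex_le (winf v) (inf1 v)" unfolding inf1_def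
    by (rule linf_greatest) (auto simp: winf_def intro!: linf_lower)
  then show ?thesis using a lex.order_antisym by blast
qed

lemma sup0_neg: "sup0 v = neg (inf1 (neg v))"
proof -
  have "neg ` {suffix v (k + 1) |k. \<not> v k} = {suffix (neg v) (k + 1) |k. neg v k}"
  proof (intro equalityI subsetI)
    fix x assume "x \<in> neg ` {suffix v (k + 1) |k. \<not> v k}"
    then obtain k where "x = neg (suffix v (k + 1))" "\<not> v k" by auto
    then have "x = suffix (neg v) (k + 1)" "neg v k" by (simp add: neg_suffix, simp add: neg_def)
    then show "x \<in> {suffix (neg v) (k + 1) |k. neg v k}" by blast
  next
    fix x assume "x \<in> {suffix (neg v) (k + 1) |k. neg v k}"
    then obtain k where k: "x = suffix (neg v) (k + 1)" "neg v k" by blast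
    then have "x = neg (suffix v (k + 1))" "\<not> v k" by (simp add: neg_suffix, simp add: neg_def)
    then show "x \<in> neg ` {suffix v (k + 1) |k. \<not> v k}" by blast
  qed
  then show ?thesis by (simp add: sup0_def inf1_def lsup_char)
qed

lemma inf1_neg: "inf1 (neg v) = neg (sup0 v)"
  by (simp add: sup0_neg)

lemma sup0_neg2: "sup0 (neg v) = neg (inf1 v)"
  by (simp add: sup0_neg)

lemma wsup_neg: "wsup v = neg (winf (neg v))"
proof -
  have "neg ` {suffix v k |k. True} = {suffix (neg v) k |k. True}"
  proof (intro equalityI subsetI)
    fix x assume "x \<in> neg ` {suffix v k |k. True}"
    then show "x \<in> {suffix (neg v) k |k. True}" by (auto simp: neg_suffix)
  next
    fix x assume "x \<in> {suffix (neg v) k |k. True}"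
    then obtain k where "x = neg (suffix v k)" by (auto simp: neg_suffix)
    then show "x \<in> neg ` {suffix v k |k. True}" by blast
  qed
  then show ?thesis by (simp add: wsup_def winf_def lsup_char)
qed

lemma wsup_eq: "lex_le v (sup0 v) \<Longrightarrow> wsup v = sup0 v"
proof -
  assume "lex_le v (sup0 v)"
  then have "lex_le (inf1 (neg v)) (neg v)" by (simp add: inf1_neg)
  then have "winf (neg v) = inf1 (neg v)" by (rule winf_eq)
  then show ?thesis by (simp add: wsup_neg sup0_neg)
qed


lemma ex01:
  assumes "\<forall>k. u \<noteq> (\<lambda>i. k \<le> i)" and "\<forall>k. u \<noteq> (\<lambda>i. i < k)"
  shows "\<exists>z. \<not> u z \<and> u (Suc z)"
proof (rule ccontr)
  assume "\<not> (\<exists>z. \<not> u z \<and> u (Suc z))"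
  then have pers: "\<not> u z \<Longrightarrow> \<not> u (Suc z)" for z by blast
  show False
  proof (cases "\<forall>i. u i")
    case True then have "u = (\<lambda>i. 0 \<le> i)" by auto
    then show False using assms(1) by blast
  next
    case False
    then obtain j where j: "\<not> u j" "\<forall>i<j. u i"
      using exists_least_iff[of "\<lambda>i. \<not> u i"] by auto
    have "\<not> u i" if "j \<le> i" for i
      using that
    proof (induction i rule: dec_induct)
      case base then show ?case using j by simp
    next
      case (step i) then show ?case using pers by blast
    qed
    then have "u = (\<lambda>i. i < j)" using j by (auto simp: fun_eq_iff) (meson not_le)
    then show False using assms(2) by blast
  qed
qed

lemma core:
  assumes h1: "\<forall>k. u \<noteq> (\<lambda>i. k \<le> i)" and h2: "\<forall>k. u \<noteq> (\<lambda>i. i < k)"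
    and Pg: "inf1 (suffix u g) = inf1 u"
    and ng: "inf1 (suffix u (Suc g)) \<noteq> inf1 u"
  shows "lex_le (inf1 u) (suffix u g) \<and> lex_le (suffix u g) (sup0 u)"
proof -
  define m where "m = inf1 u"
  have st: "u g" "m = suffix u (Suc g)" using inf1_step[of u g] Pg ng m_def by auto
  have sg: "suffix u g = cns True m" using suffix_cns[of u g] st by simp
  have A: "lex_le m (suffix u g)" using sg le_cns_True by simp
  obtain z where z: "\<not> u z" "u (Suc z)" using ex01[OF h1 h2] by blast
  have B: "lex_le (cns True m) (sup0 u)"
  proof (cases "\<exists>a. m a")
    case False
    then have "m = (\<lambda>_. False)" by auto
    moreover have "lex_le (cns True (\<lambda>_. False)) (suffix u (Suc z))"
      using z by (intro start_True) (simp add: suffix_def)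
    ultimately show ?thesis using S0_mem[of u z] z lex.order_trans by blast
  next
    case True
    then obtain a where a: "m a" "\<forall>i<a. \<not> m i"
      using exists_least_iff[of "\<lambda>i. m i"] by auto
    have mi: "m i = u (i + Suc g)" for i using st by (simp add: suffix_def)
    show ?thesis
    proof (cases a)
      case 0
      then have u1: "u (Suc g)" using a mi by simp
      have "lex_le m (suffix u (Suc (Suc g)))" using S1_mem[of u "Suc g"] u1 m_def by simp
      moreover have "m = cns True (suffix u (Suc (Suc g)))"
        using st suffix_cns[of u "Suc g"] u1 by simp
      ultimately have w: "suffix u (Suc (Suc g)) = (\<lambda>_. True)"
        using cns_True_le_self by metis
      then have mt: "m = (\<lambda>_. True)"
        using \<open>m = cns True (suffix u (Suc (Suc g)))\<close> by (auto simp: cns_def)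
      have allT: "u k \<Longrightarrow> suffix u (Suc k) = (\<lambda>_. True)" for k
        using S1_mem[of u k] mt m_def top_le by metis
      obtain j where j: "u j" "\<forall>i<j. \<not> u i"
        using exists_least_iff[of "\<lambda>i. u i"] st(1) by auto
      have "u i = (j \<le> i)" for i
      proof (cases "i \<le> j")
        case True then show ?thesis using j by (cases "i = j") auto
      next
        case False
        then have "suffix u (Suc j) (i - Suc j) = u i" by (simp add: suffix_def)
        then show ?thesis using allT[OF j(1)] False by (metis (full_types) nat_le_linear)
      qed
      then have "u = (\<lambda>i. j \<le> i)" by auto
      then show ?thesis using h1 by blast
    next
      case (Suc a')
      have z0: "\<not> u (Suc g + a')" using a mi[of a'] Suc by (simp add: add.commute)
      have z1: "u (Suc (Suc g + a'))" using a mi[of a] Suc by (simp add: add.commute)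
      let ?z = "Suc g + a'"
      have "lex_le m (suffix u (Suc (Suc ?z)))" using S1_mem[of u "Suc ?z"] z1 m_def by simp
      then have "lex_le (cns True m) (cns True (suffix u (Suc (Suc ?z))))" by (rule cns_mono)
      also have "cns True (suffix u (Suc (Suc ?z))) = suffix u (Suc ?z)"
        using suffix_cns[of u "Suc ?z"] z1 by simp
      also have "lex_le \<dots> (sup0 u)" using S0_mem[of u ?z] z0 by simp
      finally show ?thesis .
    qed
  qed
  show ?thesis using A B sg m_def by simp
qed

lemma step_exists: "P (0::nat) \<Longrightarrow> \<not> P n \<Longrightarrow> \<exists>g. P g \<and> \<not> P (Suc g)"
  by (induction n) auto

theorem lemma2p5:
  fixes u :: bword
  assumes "\<forall>k. u \<noteq> (\<lambda>i. k \<le> i)"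
    and "\<forall>k. u \<noteq> (\<lambda>i. i < k)"
  shows "\<exists>k. winf (suffix u k) = inf1 (suffix u k) \<and> inf1 (suffix u k) = inf1 u \<and>
             wsup (suffix u k) = sup0 (suffix u k) \<and> sup0 (suffix u k) = sup0 u"
proof -
  define P where "P k \<longleftrightarrow> inf1 (suffix u k) = inf1 u \<and> sup0 (suffix u k) = sup0 u" for k
  have suff: "\<exists>k. P k \<and> lex_le (inf1 u) (suffix u k) \<and> lex_le (suffix u k) (sup0 u)"
  proof -
    obtain z where z: "\<not> u z" "u (Suc z)" using ex01[OF assms] by blast
    show ?thesis
    proof (cases "P (Suc z)")
      case True
      have "lex_le (inf1 u) (suffix u (Suc (Suc z)))" using S1_mem[of u "Suc z"] z by simp
      also have "lex_le \<dots> (cns True (suffix u (Suc (Suc z))))" by (rule le_cns_True)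
      also have "cns True (suffix u (Suc (Suc z))) = suffix u (Suc z)"
        using suffix_cns[of u "Suc z"] z by simp
      finally have "lex_le (inf1 u) (suffix u (Suc z))" .
      moreover have "lex_le (suffix u (Suc z)) (sup0 u)" using S0_mem[of u z] z by simp
      ultimately show ?thesis using True by blast
    next
      case False
      have "P 0" by (simp add: P_def)
      then obtain g where g: "P g" "\<not> P (Suc g)" using step_exists[of P] False by blast
      show ?thesis
      proof (cases "inf1 (suffix u (Suc g)) = inf1 u")
        case False
        then show ?thesis using core[OF assms, of g] g(1) unfolding P_def by blast
      next
        case True
        then have ns: "sup0 (suffix u (Suc g)) \<noteq> sup0 u" using g(2) P_def by blast
        have n1: "\<forall>k. neg u \<noteq> (\<lambda>i. k \<le> i)"
        proof
          fix k show "neg u \<noteq> (\<lambda>i. k \<le> i)"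
          proof
            assume "neg u = (\<lambda>i. k \<le> i)"
            then have "u = neg (\<lambda>i. k \<le> i)" by (metis neg_neg)
            then have "u = (\<lambda>i. i < k)" by (simp add: neg_def not_le)
            then show False using assms(2) by blast
          qed
        qed
        have n2: "\<forall>k. neg u \<noteq> (\<lambda>i. i < k)"
        proof
          fix k show "neg u \<noteq> (\<lambda>i. i < k)"
          proof
            assume "neg u = (\<lambda>i. i < k)"
            then have "u = neg (\<lambda>i. i < k)" by (metis neg_neg)
            then have "u = (\<lambda>i. k \<le> i)" by (simp add: neg_def not_less)
            then show False using assms(1) by blast
          qed
        qed
        have c1: "inf1 (suffix (neg u) g) = inf1 (neg u)"
          using g(1) by (simp add: P_def inf1_neg flip: neg_suffix)
        have c2: "inf1 (suffix (neg u) (Suc g)) \<noteq> inf1 (neg u)"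
          using ns by (simp add: inf1_neg flip: neg_suffix)
        have "lex_le (inf1 (neg u)) (suffix (neg u) g) \<and> lex_le (suffix (neg u) g) (sup0 (neg u))"
          by (rule core[OF n1 n2 c1 c2])
        then have "lex_le (neg (sup0 u)) (neg (suffix u g)) \<and>
                   lex_le (neg (suffix u g)) (neg (inf1 u))"
          by (simp add: inf1_neg sup0_neg2 flip: neg_suffix)
        then show ?thesis using g(1) by auto
      qed
    qed
  qed
  then obtain k where k: "P k" "lex_le (inf1 u) (suffix u k)" "lex_le (suffix u k) (sup0 u)"
    by blast
  have "winf (suffix u k) = inf1 (suffix u k)" using k by (intro winf_eq) (simp add: P_def)
  moreover have "wsup (suffix u k) = sup0 (suffix u k)" using k by (intro wsup_eq) (simp add: P_def)
  ultimately show ?thesis using k(1) P_def by blast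
qed

end
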